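(* Fix $1\le r\le n$. Let $A\in ARI$ be a polynomial-valued mould concentrated in depth $r$, with $A^r$ homogeneous of degree $n-r$, such that $A$ is alternal, push-invariant, and $swap(A)$ is circ-neutral. Let $B=swap(A)$ and assume that $B(v_1,\dots,v_r)=(-1)^{r-1}B(v_r,\dots,v_1)$. Then if $n-r$ is odd, $A=0$.
   Context: $ARI$ is the space of moulds $A=(A^r)_{r\ge0}$ with $A^r\in\mathbb{Q}(u_1,\dots,u_r)$, $A^0=0$. $swap(A)(v_1,\dots,v_r)=A(v_r,v_{r-1}-v_r,\dots,v_1-v_2)$. $A$ is alternal if for every $r\ge2$ and $1\le i\le[r/2]$ the sum of $A^r$ over all shuffles of $(u_1,\dots,u_i)$ with $(u_{i+1},\dots,u_r)$ vanishes. $A$ is push-invariant if $A(u_0,u_1,\dots,u_{r-1})=A(u_1,\dots,u_r)$ with $u_0=-u_1-\dots-u_r$. A mould $B$ in variables $v_i$ is circ-neutral if $\sum_{i=0}^{r-1}B(v_{i+1},\dots,v_r,v_1,\dots,v_i)=0$ for $r>1$. *)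

theory Defs
  imports Complex_Main
begin

text \<open>A mould is represented as \<open>A :: nat \<Rightarrow> rat list \<Rightarrow> rat\<close>: \<open>A s\<close> is the depth-s
  component, evaluated on lists of length s (values on other lists are irrelevant).
  Since the moulds in question are polynomial-valued and Q is infinite, polynomial
  identities are equivalent to identities of the associated functions.\<close>

definition hom_poly_fun :: "nat \<Rightarrow> nat \<Rightarrow> (rat list \<Rightarrow> rat) \<Rightarrow> bool" where
  "hom_poly_fun r d f \<longleftrightarrow>
     (\<exists>c :: nat list \<Rightarrow> rat. \<forall>us. length us = r \<longrightarrow>
        f us = (\<Sum>\<alpha>\<in>{\<alpha>. length \<alpha> = r \<and> sum_list \<alpha> = d}.
                   c \<alpha> * (\<Prod>i<r. (us ! i) ^ (\<alpha> ! i))))"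

text \<open>swap(A)(v_1,...,v_r) = A(v_r, v_{r-1}-v_r, ..., v_1-v_2) (0-indexed lists).\<close>
definition swap_args :: "rat list \<Rightarrow> rat list" where
  "swap_args vs = (let r = length vs in
     map (\<lambda>k. if k = 0 then vs ! (r - 1) else vs ! (r - 1 - k) - vs ! (r - k)) [0..<r])"

definition swap :: "(nat \<Rightarrow> rat list \<Rightarrow> rat) \<Rightarrow> nat \<Rightarrow> rat list \<Rightarrow> rat" where
  "swap A s vs = A s (swap_args vs)"

text \<open>Alternality: shuffles of the index words [0..<i] and [i..<s] (all letters distinct,
  so the set of shuffles coincides with the multiset of shuffles).\<close>
definition alternal :: "(nat \<Rightarrow> rat list \<Rightarrow> rat) \<Rightarrow> bool" where
  "alternal A \<longleftrightarrow> (\<forall>s us. length us = s \<and> s \<ge> 2 \<longrightarrow>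
      (\<forall>i. 1 \<le> i \<and> i \<le> s div 2 \<longrightarrow>
         (\<Sum>w\<in>shuffles [0..<i] [i..<s]. A s (map (\<lambda>j. us ! j) w)) = 0))"

definition push_invariant :: "(nat \<Rightarrow> rat list \<Rightarrow> rat) \<Rightarrow> bool" where
  "push_invariant A \<longleftrightarrow> (\<forall>s us. length us = s \<and> s \<ge> 1 \<longrightarrow>
      A s ((- sum_list us) # butlast us) = A s us)"

definition circ_neutral :: "(nat \<Rightarrow> rat list \<Rightarrow> rat) \<Rightarrow> bool" where
  "circ_neutral B \<longleftrightarrow> (\<forall>s vs. length vs = s \<and> s > 1 \<longrightarrow>
      (\<Sum>i<s. B s (rotate i vs)) = 0)"

end

theory Submission
  imports Defs
begin

fun shsum :: "('a list \<Rightarrow> 'b::comm_monoid_add) \<Rightarrow> 'a list \<Rightarrow> 'a list \<Rightarrow> 'b" where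
  "shsum g [] ys = g ys"
| "shsum g xs [] = g xs"
| "shsum g (x#xs) (y#ys) = shsum (\<lambda>w. g (x#w)) xs (y#ys) + shsum (\<lambda>w. g (y#w)) (x#xs) ys"

lemma shsum_Nil2[simp]: "shsum g xs [] = g xs"
  by (cases xs) auto

lemma shsum_commute: "shsum g xs ys = shsum g ys xs"
  by (induction g xs ys rule: shsum.induct) (auto simp: add.commute)

lemma shsum_map: "shsum g (map h xs) (map h ys) = shsum (\<lambda>w. g (map h w)) xs ys"
  by (induction "\<lambda>w. g (map h w)" xs ys arbitrary: g rule: shsum.induct) auto

lemma sum_shuffles_shsum:
  "distinct (xs @ ys) \<Longrightarrow> (\<Sum>w\<in>shuffles xs ys. g w) = shsum g xs ys"
proof (induction xs ys arbitrary: g rule: shuffles.induct)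
  case (3 x xs y ys)
  have d: "x \<noteq> y" using "3.prems" by auto
  have disj: "(#) x ` shuffles xs (y # ys) \<inter> (#) y ` shuffles (x # xs) ys = {}" using d by auto
  have "(\<Sum>w\<in>shuffles (x#xs) (y#ys). g w) =
      (\<Sum>w\<in>(#) x ` shuffles xs (y # ys). g w) + (\<Sum>w\<in>(#) y ` shuffles (x # xs) ys. g w)"
    by (simp add: sum.union_disjoint disj)
  also have "\<dots> = (\<Sum>w\<in>shuffles xs (y # ys). g (x#w)) + (\<Sum>w\<in>shuffles (x # xs) ys. g (y#w))"
    by (simp add: sum.reindex)
  also have "\<dots> = shsum g (x#xs) (y#ys)"
    using "3.IH"[of "\<lambda>w. g (x#w)"] "3.IH"(2)[of "\<lambda>w. g (y#w)"] "3.prems" by auto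
  finally show ?case .
qed auto

lemma shsum_rev:
  fixes g :: "'a list \<Rightarrow> rat"
  assumes z: "\<And>xs ys. xs \<noteq> [] \<Longrightarrow> ys \<noteq> [] \<Longrightarrow> length xs + length ys = r \<Longrightarrow> shsum g xs ys = 0"
    and len: "length a = r" and r: "r \<ge> 1"
  shows "g (rev a) = (-1)^(r-1) * g a"
proof -
  define R where "R j = shsum (\<lambda>w. g (a!j # w)) (rev (take j a)) (drop (Suc j) a)" for j
  have step: "\<forall>j. j < r \<longrightarrow> R j = (-1)^j * g a"
  proof (intro allI)
    fix j show "j < r \<longrightarrow> R j = (-1)^j * g a"
    proof (induction j)
      case 0
      show ?case using len r by (auto simp: R_def Cons_nth_drop_Suc)
    next
      case (Suc j)
      show ?case
      proof
        assume j: "Suc j < r"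
        have e1: "rev (take (Suc j) a) = a!j # rev (take j a)"
          using j len by (simp add: take_Suc_conv_app_nth)
        have e2: "drop (Suc j) a = a!(Suc j) # drop (Suc (Suc j)) a"
          using j len by (simp add: Cons_nth_drop_Suc)
        have "shsum g (rev (take (Suc j) a)) (drop (Suc j) a) = 0"
          using j len by (intro z) auto
        also have "shsum g (rev (take (Suc j) a)) (drop (Suc j) a) = R j + R (Suc j)"
          unfolding R_def e1 e2 by simp
        finally have "R (Suc j) = - R j" by simp
        then show "R (Suc j) = (-1)^(Suc j) * g a" using Suc j by simp
      qed
    qed
  qed
  have "R (r-1) = g (rev a)"
  proof -
    have E: "a!(r-1) # rev (take (r-1) a) = rev a"
    proof -
      have "take (Suc (r-1)) a = take (r-1) a @ [a!(r-1)]"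
        using len r by (intro take_Suc_conv_app_nth) simp
      then have "a = take (r-1) a @ [a!(r-1)]" using len r by simp
      then have RA: "rev a = rev (take (r-1) a @ [a!(r-1)])" by (rule arg_cong)
      show ?thesis by (subst RA) simp
    qed
    have "R (r-1) = g (a!(r-1) # rev (take (r-1) a))"
      unfolding R_def using len r by simp
    then show ?thesis unfolding E .
  qed
  moreover have "R (r-1) = (-1)^(r-1) * g a" using step r by simp
  ultimately show ?thesis by simp
qed

lemma hom_odd:
  assumes h: "hom_poly_fun r d f" and d: "odd d" and len: "length us = r"
  shows "f (map uminus us) = - f us"
proof -
  obtain c where c: "\<forall>us. length us = r \<longrightarrow>
        f us = (\<Sum>\<alpha>\<in>{\<alpha>. length \<alpha> = r \<and> sum_list \<alpha> = d}.
                   c \<alpha> * (\<Prod>i<r. (us ! i) ^ (\<alpha> ! i)))"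
    using h unfolding hom_poly_fun_def by blast
  have "f (map uminus us) = (\<Sum>\<alpha>\<in>{\<alpha>. length \<alpha> = r \<and> sum_list \<alpha> = d}.
                   c \<alpha> * (\<Prod>i<r. (map uminus us ! i) ^ (\<alpha> ! i)))"
    using len by (intro c[rule_format]) simp
  also have "\<dots> = (\<Sum>\<alpha>\<in>{\<alpha>. length \<alpha> = r \<and> sum_list \<alpha> = d}.
                   - (c \<alpha> * (\<Prod>i<r. (us ! i) ^ (\<alpha> ! i))))"
  proof (rule sum.cong)
    fix \<alpha> assume "\<alpha> \<in> {\<alpha>. length \<alpha> = r \<and> sum_list \<alpha> = d}"
    then have a: "length \<alpha> = r" "sum_list \<alpha> = d" by auto
    have s: "(\<Sum>i<r. \<alpha> ! i) = d" using a by (simp add: sum_list_sum_nth lessThan_atLeast0)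
    have "(\<Prod>i<r. (map uminus us ! i) ^ (\<alpha> ! i)) = (\<Prod>i<r. (-1::rat) ^ (\<alpha> ! i) * (us ! i) ^ (\<alpha> ! i))"
      using len by (intro prod.cong refl) (simp add: power_minus[where a="us ! _"])
    also have "\<dots> = (-1) ^ (\<Sum>i<r. \<alpha> ! i) * (\<Prod>i<r. (us ! i) ^ (\<alpha> ! i))"
      by (simp only: prod.distrib power_sum)
    also have "\<dots> = - (\<Prod>i<r. (us ! i) ^ (\<alpha> ! i))" using s d by simp
    finally show "c \<alpha> * (\<Prod>i<r. (map uminus us ! i) ^ (\<alpha> ! i)) = - (c \<alpha> * (\<Prod>i<r. (us ! i) ^ (\<alpha> ! i)))"
      by simp
  qed simp
  also have "\<dots> = - f us" using c[rule_format, OF len] by (simp only: sum_negf)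
  finally show ?thesis .
qed

lemma alternal_rev:
  assumes alt: "alternal A" and len: "length u = r" and r: "r \<ge> 1"
  shows "A r (rev u) = (-1)^(r-1) * A r u"
proof (cases "r = 1")
  case True
  then obtain x where "u = [x]" using len by (cases u) auto
  then show ?thesis using True by simp
next
  case False
  then have r2: "r \<ge> 2" using r by simp
  have z0: "shsum (A r) xs ys = 0"
    if "xs \<noteq> []" "ys \<noteq> []" "length xs + length ys = r" "length xs \<le> r div 2" for xs ys
  proof -
    define us where "us = xs @ ys"
    define i where "i = length xs"
    have "(\<Sum>w\<in>shuffles [0..<i] [i..<r]. A r (map (\<lambda>j. us ! j) w)) = 0"
    proof -
      have lu: "length us = r" using that by (simp add: us_def)
      have i1: "1 \<le> i" "i \<le> r div 2" using that by (auto simp: i_def Suc_le_eq)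
      show ?thesis using alt lu r2 i1 unfolding alternal_def by blast
    qed
    also have "(\<Sum>w\<in>shuffles [0..<i] [i..<r]. A r (map (\<lambda>j. us ! j) w))
        = shsum (\<lambda>w. A r (map (\<lambda>j. us ! j) w)) [0..<i] [i..<r]"
      by (rule sum_shuffles_shsum) simp
    also have "\<dots> = shsum (A r) (map (\<lambda>j. us ! j) [0..<i]) (map (\<lambda>j. us ! j) [i..<r])"
      by (simp add: shsum_map)
    also have "map (\<lambda>j. us ! j) [0..<i] = xs"
      by (rule nth_equalityI) (auto simp: us_def i_def nth_append)
    also have "map (\<lambda>j. us ! j) [i..<r] = ys"
      using that by (intro nth_equalityI) (auto simp: us_def i_def nth_append)
    finally show ?thesis .
  qed
  have z: "shsum (A r) xs ys = 0"
    if "xs \<noteq> []" "ys \<noteq> []" "length xs + length ys = r" for xs ys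
  proof (cases "length xs \<le> r div 2")
    case True then show ?thesis using z0 that by blast
  next
    case False
    then have "length ys \<le> r div 2" using that by linarith
    then show ?thesis using z0[of ys xs] that by (simp add: shsum_commute)
  qed
  show ?thesis by (rule shsum_rev[OF z len r])
qed


lemma swap_args_nth: "k < length vs \<Longrightarrow> swap_args vs ! k =
   (if k = 0 then vs ! (length vs - 1) else vs ! (length vs - 1 - k) - vs ! (length vs - k))"
  by (simp add: swap_args_def Let_def)

lemma length_swap_args[simp]: "length (swap_args vs) = length vs"
  by (simp add: swap_args_def Let_def)

lemma psum_Suc: "j < length u \<Longrightarrow> sum_list (take (Suc j) u) = sum_list (take j u) + u ! j"
  by (simp add: take_Suc_conv_app_nth)

definition psums :: "rat list \<Rightarrow> rat list" where
  "psums u = map (\<lambda>k. sum_list (take (Suc k) u)) [0..<length u]"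

lemma swap_rev_psums: "swap_args (rev (psums u)) = u"
proof (rule nth_equalityI)
  show "length (swap_args (rev (psums u))) = length u"
    by (simp add: swap_args_def psums_def Let_def)
next
  fix k assume k: "k < length (swap_args (rev (psums u)))"
  then have k': "k < length u" by (simp add: swap_args_def psums_def Let_def)
  show "swap_args (rev (psums u)) ! k = u ! k"
  proof (cases "k = 0")
    case True
    then show ?thesis using k' by (simp add: swap_args_def psums_def Let_def rev_nth take_Suc_conv_app_nth)
  next
    case False
    have a: "length u - 1 - (length u - 1 - k) = k" "length u - 1 - (length u - k) = k - 1"
      using k' False by auto
    have "swap_args (rev (psums u)) ! k = sum_list (take (Suc k) u) - sum_list (take (Suc (k-1)) u)"
      using k' False by (simp add: swap_args_def psums_def Let_def rev_nth a)
    also have "\<dots> = u ! k" using k' False psum_Suc[of k u] by simp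
    finally show ?thesis .
  qed
qed

lemma swap_psums: "length u \<ge> 1 \<Longrightarrow>
  swap_args (psums u) = (- sum_list (map uminus (rev u))) # butlast (map uminus (rev u))"
proof (rule nth_equalityI)
  assume u: "length u \<ge> 1"
  show "length (swap_args (psums u)) = length ((- sum_list (map uminus (rev u))) # butlast (map uminus (rev u)))"
    using u by (simp add: swap_args_def psums_def Let_def)
next
  fix k assume u: "length u \<ge> 1" and k: "k < length (swap_args (psums u))"
  then have k': "k < length u" by (simp add: swap_args_def psums_def Let_def)
  show "swap_args (psums u) ! k = ((- sum_list (map uminus (rev u))) # butlast (map uminus (rev u))) ! k"
  proof (cases "k = 0")
    case True
    have "sum_list (map uminus (rev u)) = - sum_list u"
      by (induction u) auto
    have "swap_args (psums u) ! 0 = psums u ! (length u - 1)"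
      using u by (subst swap_args_nth) (auto simp: psums_def)
    also have "\<dots> = sum_list (take (Suc (length u - 1)) u)" using u by (simp add: psums_def)
    also have "\<dots> = sum_list u" using u by simp
    finally show ?thesis using True \<open>sum_list (map uminus (rev u)) = - sum_list u\<close> by simp
  next
    case False
    have f: "length u - 1 - k < length u" "length u - k < length u" "Suc (length u - 1 - k) = length u - k"
      using k' False by auto
    have "swap_args (psums u) ! k = psums u ! (length u - 1 - k) - psums u ! (length u - k)"
      using k' False by (subst swap_args_nth) (auto simp: psums_def)
    also have "\<dots> = sum_list (take (length u - k) u) - sum_list (take (Suc (length u - k)) u)"
      using f unfolding psums_def by (simp del: upt_Suc)
    also have "\<dots> = - u ! (length u - k)" using f psum_Suc[of "length u - k" u] by simp
    also have "\<dots> = ((- sum_list (map uminus (rev u))) # butlast (map uminus (rev u))) ! k"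
      using k' False by (simp add: nth_butlast rev_nth)
    finally show ?thesis .
  qed
qed

theorem lemma15:
  fixes r n :: nat and A :: "nat \<Rightarrow> rat list \<Rightarrow> rat"
  assumes "1 \<le> r" and "r \<le> n"
    and conc: "\<forall>s us. s \<noteq> r \<and> length us = s \<longrightarrow> A s us = 0"
    and hom: "hom_poly_fun r (n - r) (A r)"
    and "alternal A"
    and "push_invariant A"
    and "circ_neutral (swap A)"
    and sym: "\<forall>vs. length vs = r \<longrightarrow> swap A r vs = (-1) ^ (r - 1) * swap A r (rev vs)"
    and "odd (n - r)"
  shows "\<forall>s us. length us = s \<longrightarrow> A s us = 0"
proof (intro allI impI)
  fix s and us :: "rat list"
  assume len: "length us = s"
  show "A s us = 0"
  proof (cases "s = r")
    case False then show ?thesis using conc len by blast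
  next
    case True
    define w where "w = map uminus (rev us)"
    define sg :: rat where "sg = (-1) ^ (r - 1)"
    have lp: "length (psums us) = r" using len True by (simp add: psums_def)
    have e1: "A r (swap_args (psums us)) = sg * A r us"
      using sym lp swap_rev_psums[of us] by (simp add: swap_def sg_def)
    have lw: "length w = r" using len True by (simp add: w_def)
    have e2: "A r (swap_args (psums us)) = A r w"
      using swap_psums[of us] len True assms(1) assms(6)[unfolded push_invariant_def, rule_format, where s=r and us=w] lw
      unfolding w_def[symmetric] by auto
    have e3: "A r w = - A r (rev us)"
      unfolding w_def using hom_odd[OF hom assms(9)] len True by simp
    have e4: "A r (rev us) = sg * A r us"
      using alternal_rev[OF assms(5) _ assms(1), of us] len True by (simp add: sg_def)
    have "sg * A r us = - (sg * A r us)" using e1 e2 e3 e4 by simp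
    then have "sg * A r us = 0" by simp
    moreover have "sg \<noteq> 0" by (simp add: sg_def)
    ultimately show ?thesis using True by simp
  qed
qed

end
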